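(* Let $X$ be a random variable, $Z$ a random variable jointly distributed with $X$, and $f,g$ real functions with $\mathbb{E}[f(X)^2],\mathbb{E}[g(X)^2]<\infty$ and $\operatorname{Var}[g(X)]>0$. If $\operatorname{Var}(\mathbb{E}[g(X)\mid Z])=0$, then $$\operatorname{Var}\mathbb{E}[f(X)\mid Z]\le\operatorname{Var}[f(X)]-\frac{\operatorname{Cov}(f(X),g(X))^2}{\operatorname{Var}[g(X)]}.$$ *)

theory Defs
  imports "HOL-Probability.Probability"
begin

text \<open>Variance and covariance of real random variables on a (probability) measure space M,
  written out as the library's Bochner integrals (the library's variance is a locale
  abbreviation of exactly this term).\<close>

definition var :: "'w measure \<Rightarrow> ('w \<Rightarrow> real) \<Rightarrow> real" where
  "var M Y = (\<integral>w. (Y w - (\<integral>v. Y v \<partial>M))\<^sup>2 \<partial>M)"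

definition cov :: "'w measure \<Rightarrow> ('w \<Rightarrow> real) \<Rightarrow> ('w \<Rightarrow> real) \<Rightarrow> real" where
  "cov M Y W = (\<integral>w. (Y w - (\<integral>v. Y v \<partial>M)) * (W w - (\<integral>v. W v \<partial>M)) \<partial>M)"

definition cond_exp_rv :: "'w measure \<Rightarrow> ('w \<Rightarrow> 'b) \<Rightarrow> 'b measure \<Rightarrow> ('w \<Rightarrow> real) \<Rightarrow> ('w \<Rightarrow> real)" where
  "cond_exp_rv M Z K Y = real_cond_exp M (vimage_algebra (space M) Z K) Y"

end

theory Submission
  imports Defs
begin

lemma L2_prod:
  fixes a b :: "'w \<Rightarrow> real"
  assumes "integrable M (\<lambda>x. (a x)\<^sup>2)" "integrable M (\<lambda>x. (b x)\<^sup>2)"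
    "a \<in> borel_measurable M" "b \<in> borel_measurable M"
  shows "integrable M (\<lambda>x. a x * b x)"
proof (rule Bochner_Integration.integrable_bound[of _ "\<lambda>x. (a x)\<^sup>2 + (b x)\<^sup>2"])
  show "integrable M (\<lambda>x. (a x)\<^sup>2 + (b x)\<^sup>2)" using assms by auto
  show "(\<lambda>x. a x * b x) \<in> borel_measurable M" using assms by auto
  show "AE x in M. norm (a x * b x) \<le> norm ((a x)\<^sup>2 + (b x)\<^sup>2)"
  proof (rule AE_I2)
    fix x
    have "0 \<le> (\<bar>a x\<bar> - \<bar>b x\<bar>)\<^sup>2" by simp
    hence "2 * (\<bar>a x\<bar> * \<bar>b x\<bar>) \<le> (a x)\<^sup>2 + (b x)\<^sup>2"
      by (simp add: power2_eq_square algebra_simps)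
    moreover have "0 \<le> \<bar>a x\<bar> * \<bar>b x\<bar>" by simp
    moreover have "norm (a x * b x) = \<bar>a x\<bar> * \<bar>b x\<bar>" by (simp add: abs_mult)
    moreover have "norm ((a x)\<^sup>2 + (b x)\<^sup>2) = (a x)\<^sup>2 + (b x)\<^sup>2" by simp
    ultimately show "norm (a x * b x) \<le> norm ((a x)\<^sup>2 + (b x)\<^sup>2)"
      by linarith
  qed
qed

theorem corollary4:
  fixes M :: "'w measure" and N :: "'a measure" and K :: "'b measure"
    and X :: "'w \<Rightarrow> 'a" and Z :: "'w \<Rightarrow> 'b" and f g :: "'a \<Rightarrow> real"
  assumes "prob_space M"
    and "X \<in> measurable M N" and "Z \<in> measurable M K"
    and "f \<in> borel_measurable N" and "g \<in> borel_measurable N"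
    and "integrable M (\<lambda>w. (f (X w))\<^sup>2)" and "integrable M (\<lambda>w. (g (X w))\<^sup>2)"
    and "var M (\<lambda>w. g (X w)) > 0"
    and "var M (cond_exp_rv M Z K (\<lambda>w. g (X w))) = 0"
  shows "var M (cond_exp_rv M Z K (\<lambda>w. f (X w)))
           \<le> var M (\<lambda>w. f (X w)) - (cov M (\<lambda>w. f (X w)) (\<lambda>w. g (X w)))\<^sup>2 / var M (\<lambda>w. g (X w))"
proof -
  interpret prob_space M by fact
  define S where "S = vimage_algebra (space M) Z K"
  have sub: "subalgebra M S"
    unfolding subalgebra_def S_def
    using assms(3) by (auto simp: sets_vimage_algebra2 measurable_def)
  interpret S: finite_measure_subalgebra M S
    by unfold_locales (rule sub)
  define F where "F = (\<lambda>w. f (X w))"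
  define G where "G = (\<lambda>w. g (X w))"
  define C where "C = real_cond_exp M S F"
  define D where "D = real_cond_exp M S G"
  have Fm[measurable]: "F \<in> borel_measurable M" unfolding F_def using assms(2,4) by measurable
  have Gm[measurable]: "G \<in> borel_measurable M" unfolding G_def using assms(2,5) by measurable
  have Cm[measurable]: "C \<in> borel_measurable M" "C \<in> borel_measurable S" unfolding C_def by auto
  have Dm[measurable]: "D \<in> borel_measurable M" "D \<in> borel_measurable S" unfolding D_def by auto
  have F2: "integrable M (\<lambda>w. (F w)\<^sup>2)" using assms(6) unfolding F_def .
  have G2: "integrable M (\<lambda>w. (G w)\<^sup>2)" using assms(7) unfolding G_def .
  have F1: "integrable M F" by (rule square_integrable_imp_integrable[OF Fm F2])
  have G1: "integrable M G" by (rule square_integrable_imp_integrable[OF Gm G2])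
  have C2: "integrable M (\<lambda>w. (C w)\<^sup>2)" unfolding C_def
    by (rule S.integrable_convex_cond_exp[of _ UNIV _ _ power2])
       (auto simp: F1 F2 convex_power2)
  have D2: "integrable M (\<lambda>w. (D w)\<^sup>2)" unfolding D_def
    by (rule S.integrable_convex_cond_exp[of _ UNIV _ _ power2])
       (auto simp: G1 G2 convex_power2)
  have C1: "integrable M C" by (rule square_integrable_imp_integrable[OF Cm(1) C2])
  have D1: "integrable M D" by (rule square_integrable_imp_integrable[OF Dm(1) D2])
  define a where "a = expectation F"
  define b where "b = expectation G"
  have EC: "expectation C = a" unfolding C_def a_def using S.real_cond_exp_int(2)[OF F1] .
  have ED: "expectation D = b" unfolding D_def b_def using S.real_cond_exp_int(2)[OF G1] .
  have "var M D = 0" using assms(9) unfolding D_def G_def cond_exp_rv_def S_def .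
  hence e0: "expectation (\<lambda>w. (D w - b)\<^sup>2) = 0" unfolding var_def ED .
  have iD: "integrable M (\<lambda>w. (D w - b)\<^sup>2)"
    using D1 D2 by (simp add: power2_diff)
  have "AE w in M. (D w - b)\<^sup>2 = 0"
    using integral_nonneg_eq_0_iff_AE[OF iD] e0 by simp
  hence Dc: "AE w in M. D w = b" by auto
  have CF: "integrable M (\<lambda>w. C w * F w)" by (rule L2_prod[OF C2 F2 Cm(1) Fm])
  have CG: "integrable M (\<lambda>w. C w * G w)" by (rule L2_prod[OF C2 G2 Cm(1) Gm])
  have FG: "integrable M (\<lambda>w. F w * G w)" by (rule L2_prod[OF F2 G2 Fm Gm])
  have ECF: "expectation (\<lambda>w. C w * F w) = expectation (\<lambda>w. (C w)\<^sup>2)"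
    using S.real_cond_exp_intg(2)[OF CF Cm(2) Fm] unfolding C_def[symmetric]
    by (simp add: power2_eq_square)
  have "expectation (\<lambda>w. C w * G w) = expectation (\<lambda>w. C w * D w)"
    using S.real_cond_exp_intg(2)[OF CG Cm(2) Gm] unfolding D_def by simp
  also have "\<dots> = expectation (\<lambda>w. C w * b)"
    by (rule integral_cong_AE) (use Dc in auto)
  also have "\<dots> = a * b" using EC by simp
  finally have ECG: "expectation (\<lambda>w. C w * G w) = a * b" .
  define vF where "vF = var M F"
  define vG where "vG = var M G"
  define vC where "vC = var M C"
  define c where "c = cov M F G"
  have vF: "vF = expectation (\<lambda>w. (F w)\<^sup>2) - a\<^sup>2"
    unfolding vF_def var_def a_def by (rule variance_eq[OF F1 F2])
  have vC: "vC = expectation (\<lambda>w. (C w)\<^sup>2) - a\<^sup>2"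
    unfolding vC_def var_def EC[symmetric] by (rule variance_eq[OF C1 C2])
  have vG: "vG = expectation (\<lambda>w. (G w)\<^sup>2) - b\<^sup>2"
    unfolding vG_def var_def b_def by (rule variance_eq[OF G1 G2])
  have c: "c = expectation (\<lambda>w. F w * G w) - a * b"
  proof -
    have "c = expectation (\<lambda>w. F w * G w - b * F w - a * G w + a * b)"
      unfolding c_def cov_def a_def[symmetric] b_def[symmetric]
      by (rule arg_cong[where f = expectation]) (auto simp: algebra_simps)
    also have "\<dots> = expectation (\<lambda>w. F w * G w) - b * a - a * b + a * b"
      using FG F1 G1 by (simp add: a_def b_def prob_space)
    finally show ?thesis by simp
  qed
  have vGpos: "vG > 0" using assms(8) unfolding vG_def G_def .
  define t where "t = c / vG"
  define H where "H = (\<lambda>w. F w - C w - t * (G w - b))"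
  have "0 \<le> expectation (\<lambda>w. (H w)\<^sup>2)" by simp
  also have "expectation (\<lambda>w. (H w)\<^sup>2) =
     expectation (\<lambda>w. (F w)\<^sup>2 + (C w)\<^sup>2 + t\<^sup>2 * (G w)\<^sup>2 - 2 * (C w * F w) - 2 * t * (F w * G w)
        + 2 * t * (C w * G w) + 2 * t * b * F w - 2 * t * b * C w - 2 * t\<^sup>2 * b * G w + t\<^sup>2 * b\<^sup>2)"
    unfolding H_def
    by (rule arg_cong[where f = expectation]) (auto simp: power2_eq_square algebra_simps)
  also have "\<dots> = expectation (\<lambda>w. (F w)\<^sup>2) + expectation (\<lambda>w. (C w)\<^sup>2) + t\<^sup>2 * expectation (\<lambda>w. (G w)\<^sup>2)
       - 2 * expectation (\<lambda>w. C w * F w) - 2 * t * expectation (\<lambda>w. F w * G w)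
        + 2 * t * expectation (\<lambda>w. C w * G w) + 2 * t * b * a - 2 * t * b * a - 2 * t\<^sup>2 * b * b + t\<^sup>2 * b\<^sup>2"
    using F1 F2 G1 G2 C1 C2 CF CG FG EC
    by (simp add: prob_space a_def b_def)
  also have "\<dots> = vF - vC - 2 * t * c + t\<^sup>2 * vG"
    unfolding vF vC vG c ECF ECG by (simp add: power2_eq_square algebra_simps)
  also have "\<dots> = vF - vC - c\<^sup>2 / vG"
    unfolding t_def using vGpos by (simp add: power2_eq_square field_simps)
  finally have "vC \<le> vF - c\<^sup>2 / vG" by simp
  thus ?thesis
    unfolding vC_def vF_def vG_def c_def C_def F_def G_def cond_exp_rv_def S_def .
qed

end
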